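(* Suppose Assumption (A) holds. Let $f\in L_2^0(\Theta^K,\boldsymbol\mu_{\mathrm W})$ with $\|f\|_{L_2(\Theta^K,\boldsymbol\mu_{\mathrm W})}=1$, and denote by $\mathbb V_{\boldsymbol\mu_{\mathrm W}}[f]$ and $\mathbb V_{\boldsymbol\mu_\sigma}[f]$ the variances of $f$ under $\boldsymbol\mu_{\mathrm W}$ and $\boldsymbol\mu_\sigma$, $\sigma\in S_K$. Then $$0<\frac{\Lambda_m}{2-\Lambda_m}\le\frac{1}{|S_K|}\sum_{\sigma\in S_K}\mathbb V_{\boldsymbol\mu_\sigma}[f]\le\mathbb V_{\boldsymbol\mu_{\mathrm W}}[f]=1,$$ where $\Lambda_m=\min_{\sigma,\rho\in S_K}\Lambda_{\sigma,\rho}$.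
   Context: Setting: $\Theta$ is a separable Banach space with Borel $\sigma$-algebra, $\mu_{\mathrm{pr}}$ a probability measure on $\Theta$, $\Phi:\Theta\to\mathbb R$ measurable; temperatures $1=T_1<\dots<T_K\le\infty$; $\mu_k$ has $\mu_{\mathrm{pr}}$-density $\pi_k=e^{-\Phi/T_k}/Z_k$, $Z_k=\int e^{-\Phi/T_k}d\mu_{\mathrm{pr}}$ ($\mu_K=\mu_{\mathrm{pr}}$ if $T_K=\infty$). $S_K$ is a set of permutations of $\{1,\dots,K\}$ closed under inversion; for $\sigma\in S_K$, $\boldsymbol\mu_\sigma=\mu_{\sigma(1)}\times\dots\times\mu_{\sigma(K)}$ has density $\boldsymbol\pi_\sigma(\boldsymbol\theta)=\prod_k\pi_{\sigma(k)}(\theta_k)$ with respect to $\boldsymbol\mu_{\mathrm{pr}}=\mu_{\mathrm{pr}}^{\times K}$, and $\boldsymbol\mu_{\mathrm W}=\frac{1}{|S_K|}\sum_{\sigma\in S_K}\boldsymbol\mu_\sigma$. $L_2^0(\Theta^K,\boldsymbol\mu_{\mathrm W})$ is the set of $f\in L_2(\Theta^K,\boldsymbol\mu_{\mathrm W})$ with $\int f\,d\boldsymbol\mu_{\mathrm W}=0$. For $k=1,\dots,K$, $p_k$ is a Markov kernel on $\Theta$ generating an aperiodic, $\mu_k$-irreducible chain with invariant measure $\mu_k$, with Markov operator $P_k$. Assumption (A): (C1) each $p_k$ is $\mu_k$-reversible; (C2) each $P_k$ has an $L_2(\Theta,\mu_k)$-spectral gap, i.e. $\|P_k\|_{L_2^0(\mu_k)\to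 L_2^0(\mu_k)}<1$; (C3) for all $\sigma,\rho\in S_K$, $\Lambda_{\sigma,\rho}:=\int_{\Theta^K}\min\{\boldsymbol\pi_\sigma,\boldsymbol\pi_\rho\}\,d\boldsymbol\mu_{\mathrm{pr}}>0$. *)

theory Defs
  imports "HOL-Probability.Probability"
begin

text \<open>Phi / T, with the convention Phi / infinity = 0 (so that T = infinity gives the prior).\<close>
definition tempered :: "('a \<Rightarrow> real) \<Rightarrow> ereal \<Rightarrow> 'a \<Rightarrow> real" where
  "tempered \<Phi> t x = (if t = \<infinity> then 0 else \<Phi> x / real_of_ereal t)"

definition Zconst :: "'a measure \<Rightarrow> ('a \<Rightarrow> real) \<Rightarrow> ereal \<Rightarrow> real" where
  "Zconst M \<Phi> t = (\<integral>x. exp (- tempered \<Phi> t x) \<partial>M)"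

definition tdens :: "'a measure \<Rightarrow> ('a \<Rightarrow> real) \<Rightarrow> ereal \<Rightarrow> 'a \<Rightarrow> real" where
  "tdens M \<Phi> t x = exp (- tempered \<Phi> t x) / Zconst M \<Phi> t"

definition tmeas :: "'a measure \<Rightarrow> ('a \<Rightarrow> real) \<Rightarrow> ereal \<Rightarrow> 'a measure" where
  "tmeas M \<Phi> t = density M (\<lambda>x. ennreal (tdens M \<Phi> t x))"

definition perm_dens :: "'a measure \<Rightarrow> ('a \<Rightarrow> real) \<Rightarrow> (nat \<Rightarrow> ereal) \<Rightarrow> nat
    \<Rightarrow> (nat \<Rightarrow> nat) \<Rightarrow> (nat \<Rightarrow> 'a) \<Rightarrow> real" where
  "perm_dens M \<Phi> T K \<sigma> \<theta> = (\<Prod>k\<in>{1..K}. tdens M \<Phi> (T (\<sigma> k)) (\<theta> k))"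

definition perm_meas :: "'a measure \<Rightarrow> ('a \<Rightarrow> real) \<Rightarrow> (nat \<Rightarrow> ereal) \<Rightarrow> nat
    \<Rightarrow> (nat \<Rightarrow> nat) \<Rightarrow> (nat \<Rightarrow> 'a) measure" where
  "perm_meas M \<Phi> T K \<sigma> = (\<Pi>\<^sub>M k\<in>{1..K}. tmeas M \<Phi> (T (\<sigma> k)))"

definition mix_meas :: "'a measure \<Rightarrow> ('a \<Rightarrow> real) \<Rightarrow> (nat \<Rightarrow> ereal) \<Rightarrow> nat
    \<Rightarrow> (nat \<Rightarrow> nat) set \<Rightarrow> (nat \<Rightarrow> 'a) measure" where
  "mix_meas M \<Phi> T K S = measure_of (space (\<Pi>\<^sub>M k\<in>{1..K}. M)) (sets (\<Pi>\<^sub>M k\<in>{1..K}. M))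
      (\<lambda>A. ennreal (1 / real (card S)) * (\<Sum>\<sigma>\<in>S. emeasure (perm_meas M \<Phi> T K \<sigma>) A))"

definition overlap :: "'a measure \<Rightarrow> ('a \<Rightarrow> real) \<Rightarrow> (nat \<Rightarrow> ereal) \<Rightarrow> nat
    \<Rightarrow> (nat \<Rightarrow> nat) \<Rightarrow> (nat \<Rightarrow> nat) \<Rightarrow> real" where
  "overlap M \<Phi> T K \<sigma> \<rho> = (\<integral>\<theta>. min (perm_dens M \<Phi> T K \<sigma> \<theta>) (perm_dens M \<Phi> T K \<rho> \<theta>)
      \<partial>(\<Pi>\<^sub>M k\<in>{1..K}. M))"

definition variance_of :: "'b measure \<Rightarrow> ('b \<Rightarrow> real) \<Rightarrow> real" where
  "variance_of M f = (\<integral>x. (f x - (\<integral>y. f y \<partial>M))\<^sup>2 \<partial>M)"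

definition markov_op :: "('a \<Rightarrow> 'a measure) \<Rightarrow> ('a \<Rightarrow> real) \<Rightarrow> 'a \<Rightarrow> real" where
  "markov_op p g x = (\<integral>y. g y \<partial>(p x))"

fun kstep :: "('a \<Rightarrow> 'a measure) \<Rightarrow> 'a measure \<Rightarrow> nat \<Rightarrow> 'a \<Rightarrow> 'a measure" where
  "kstep p N 0 x = return N x"
| "kstep p N (Suc n) x = bind (kstep p N n x) p"

definition reversible :: "'a measure \<Rightarrow> ('a \<Rightarrow> 'a measure) \<Rightarrow> 'a measure \<Rightarrow> bool" where
  "reversible N p \<mu> \<longleftrightarrow> (\<forall>A\<in>sets N. \<forall>B\<in>sets N.
     (\<integral>\<^sup>+x. indicator A x * emeasure (p x) B \<partial>\<mu>) = (\<integral>\<^sup>+x. indicator B x * emeasure (p x) A \<partial>\<mu>))"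

text \<open>phi-irreducibility with phi = mu.\<close>
definition irreducible_wrt :: "'a measure \<Rightarrow> ('a \<Rightarrow> 'a measure) \<Rightarrow> 'a measure \<Rightarrow> bool" where
  "irreducible_wrt N p \<mu> \<longleftrightarrow> (\<forall>A\<in>sets N. emeasure \<mu> A > 0 \<longrightarrow>
     (\<forall>x\<in>space N. \<exists>n\<ge>1. emeasure (kstep p N n x) A > 0))"

text \<open>Aperiodicity: there is no d-cycle with d >= 2 (Meyn--Tweedie).\<close>
definition aperiodic_wrt :: "'a measure \<Rightarrow> ('a \<Rightarrow> 'a measure) \<Rightarrow> 'a measure \<Rightarrow> bool" where
  "aperiodic_wrt N p \<mu> \<longleftrightarrow> \<not> (\<exists>d::nat. d \<ge> 2 \<and> (\<exists>D::nat \<Rightarrow> 'a set.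
     (\<forall>i<d. D i \<in> sets N) \<and> disjoint_family_on D {..<d} \<and>
     (\<forall>i<d. \<forall>x\<in>D i. emeasure (p x) (D (Suc i mod d)) = 1) \<and>
     emeasure \<mu> (space N - (\<Union>i<d. D i)) = 0))"

definition spectral_gap :: "('a \<Rightarrow> 'a measure) \<Rightarrow> 'a measure \<Rightarrow> bool" where
  "spectral_gap p \<mu> \<longleftrightarrow> (\<exists>c::real. 0 \<le> c \<and> c < 1 \<and>
     (\<forall>g. g \<in> borel_measurable \<mu> \<and> integrable \<mu> (\<lambda>x. (g x)\<^sup>2) \<and> (\<integral>x. g x \<partial>\<mu>) = 0 \<longrightarrow>
        (\<integral>x. (markov_op p g x)\<^sup>2 \<partial>\<mu>) \<le> c\<^sup>2 * (\<integral>x. (g x)\<^sup>2 \<partial>\<mu>)))"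

end

theory Submission
  imports Defs
begin


lemma tempered_meas:
  assumes "sets \<mu> = sets borel" "\<Phi> \<in> borel_measurable borel"
  shows "tempered \<Phi> t \<in> borel_measurable \<mu>"
proof -
  have "tempered \<Phi> t \<in> borel_measurable borel"
    unfolding tempered_def[abs_def] using assms(2) by (cases "t = \<infinity>") auto
  then show ?thesis using measurable_cong_sets[OF assms(1) refl] by blast
qed

lemma tdens_facts:
  assumes P: "prob_space \<mu>" and S: "sets \<mu> = sets borel" and Ph: "\<Phi> \<in> borel_measurable borel"
    and I: "integrable \<mu> (\<lambda>x. exp (- tempered \<Phi> t x))"
  shows "Zconst \<mu> \<Phi> t > 0" "\<And>x. tdens \<mu> \<Phi> t x > 0" "tdens \<mu> \<Phi> t \<in> borel_measurable \<mu>"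
    "integrable \<mu> (tdens \<mu> \<Phi> t)" "(\<integral>x. tdens \<mu> \<Phi> t x \<partial>\<mu>) = 1"
    "prob_space (tmeas \<mu> \<Phi> t)" "sets (tmeas \<mu> \<Phi> t) = sets borel"
proof -
  interpret prob_space \<mu> by fact
  have m: "tempered \<Phi> t \<in> borel_measurable \<mu>" using tempered_meas[OF S Ph] .
  show Z: "Zconst \<mu> \<Phi> t > 0" unfolding Zconst_def
  proof -
    have "integral\<^sup>L \<mu> (\<lambda>x. exp (- tempered \<Phi> t x)) \<noteq> 0"
      using integral_nonneg_eq_0_iff_AE[OF I] by (simp add: AE_False emeasure_space_1)
    moreover have "integral\<^sup>L \<mu> (\<lambda>x. exp (- tempered \<Phi> t x)) \<ge> 0" by simp
    ultimately show "integral\<^sup>L \<mu> (\<lambda>x. exp (- tempered \<Phi> t x)) > 0" by linarith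
  qed
  show "\<And>x. tdens \<mu> \<Phi> t x > 0" using Z by (simp add: tdens_def)
  show mt: "tdens \<mu> \<Phi> t \<in> borel_measurable \<mu>" unfolding tdens_def[abs_def] using m by measurable
  show "integrable \<mu> (tdens \<mu> \<Phi> t)" unfolding tdens_def[abs_def] using I by simp
  show i1: "(\<integral>x. tdens \<mu> \<Phi> t x \<partial>\<mu>) = 1" unfolding tdens_def[abs_def] using Z by (simp add: Zconst_def)
  show "sets (tmeas \<mu> \<Phi> t) = sets borel" using S by (simp add: tmeas_def)
  show "prob_space (tmeas \<mu> \<Phi> t)"
  proof
    have "emeasure (tmeas \<mu> \<Phi> t) (space (tmeas \<mu> \<Phi> t)) = (\<integral>\<^sup>+x. ennreal (tdens \<mu> \<Phi> t x) \<partial>\<mu>)"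
      unfolding tmeas_def using mt by (simp add: emeasure_density)
    also have "\<dots> = ennreal (\<integral>x. tdens \<mu> \<Phi> t x \<partial>\<mu>)"
      using \<open>integrable \<mu> (tdens \<mu> \<Phi> t)\<close> \<open>\<And>x. tdens \<mu> \<Phi> t x > 0\<close>
      by (intro nn_integral_eq_integral) (auto intro: less_imp_le)
    finally show "emeasure (tmeas \<mu> \<Phi> t) (space (tmeas \<mu> \<Phi> t)) = 1" using i1 by simp
  qed
qed


lemma indicator_PiE_prod:
  assumes "finite I" "x \<in> extensional I"
  shows "(indicator (Pi\<^sub>E I A) x :: ennreal) = (\<Prod>i\<in>I. indicator (A i) (x i))"
proof (cases "x \<in> Pi\<^sub>E I A")
  case True then show ?thesis by (auto simp: indicator_def PiE_def intro!: prod.neutral)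
next
  case False
  then obtain i where "i \<in> I" "x i \<notin> A i" using assms(2) by (auto simp: PiE_def)
  then show ?thesis using False assms(1) by (auto simp: indicator_def intro!: prod_zero[symmetric] bexI[of _ i])
qed

lemma perm_meas_density:
  assumes P: "prob_space \<mu>" and S: "sets \<mu> = sets borel" and Ph: "\<Phi> \<in> borel_measurable borel"
    and I: "\<And>k. k \<in> {1..K} \<Longrightarrow> integrable \<mu> (\<lambda>x. exp (- tempered \<Phi> (T k) x))"
    and sig: "\<sigma> permutes {1..K}"
  shows "perm_meas \<mu> \<Phi> T K \<sigma> = density (\<Pi>\<^sub>M k\<in>{1..K}. \<mu>) (\<lambda>\<theta>. ennreal (perm_dens \<mu> \<Phi> T K \<sigma> \<theta>))"
proof -
  interpret prob_space \<mu> by fact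
  define M' where "M' i = (if i \<in> {1..K} then tmeas \<mu> \<Phi> (T (\<sigma> i)) else \<mu>)" for i
  have sk: "\<sigma> k \<in> {1..K}" if "k \<in> {1..K}" for k using permutes_in_image[OF sig] that by blast
  note tf = tdens_facts[OF P S Ph I[OF sk]]
  have M'p: "prob_space (M' i)" for i using tf(6) M'_def by (simp add: prob_space_axioms)
  have M's: "sets (M' i) = sets \<mu>" for i using tf(7) S M'_def by simp
  interpret PS': product_sigma_finite M'
    unfolding product_sigma_finite_def using M'p by (simp add: prob_space_imp_sigma_finite)
  interpret PS: product_sigma_finite "\<lambda>_. \<mu>"
    unfolding product_sigma_finite_def by (simp add: sigma_finite_measure_axioms)
  have pm: "perm_meas \<mu> \<Phi> T K \<sigma> = PiM {1..K} M'"
    unfolding perm_meas_def M'_def by (rule PiM_cong) auto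
  have tdm: "\<And>i. i \<in> {1..K} \<Longrightarrow> tdens \<mu> \<Phi> (T (\<sigma> i)) \<in> borel_measurable \<mu>" using tf(3) by blast
  have pdm: "perm_dens \<mu> \<Phi> T K \<sigma> \<in> borel_measurable (\<Pi>\<^sub>M k\<in>{1..K}. \<mu>)"
    unfolding perm_dens_def[abs_def]
  proof (intro borel_measurable_prod)
    fix i assume i: "i \<in> {1..K}"
    show "(\<lambda>\<theta>. tdens \<mu> \<Phi> (T (\<sigma> i)) (\<theta> i)) \<in> borel_measurable (\<Pi>\<^sub>M k\<in>{1..K}. \<mu>)"
      using measurable_compose[OF measurable_component_singleton[of i "{1..K}" "\<lambda>_. \<mu>"] tdm[OF i]] i by simp
  qed
  have "density (\<Pi>\<^sub>M k\<in>{1..K}. \<mu>) (\<lambda>\<theta>. ennreal (perm_dens \<mu> \<Phi> T K \<sigma> \<theta>)) = PiM {1..K} M'"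
  proof (rule PS'.PiM_eqI)
    show "sets (density (\<Pi>\<^sub>M k\<in>{1..K}. \<mu>) (\<lambda>\<theta>. ennreal (perm_dens \<mu> \<Phi> T K \<sigma> \<theta>))) = sets (PiM {1..K} M')"
      unfolding sets_density using M's by (intro sets_PiM_cong) auto
  next
    fix A assume A: "\<And>i. i \<in> {1..K} \<Longrightarrow> A i \<in> sets (M' i)"
    have As: "Pi\<^sub>E {1..K} A \<in> sets (\<Pi>\<^sub>M k\<in>{1..K}. \<mu>)"
      using A M's by (intro sets_PiM_I_finite) auto
    have "emeasure (density (\<Pi>\<^sub>M k\<in>{1..K}. \<mu>) (\<lambda>\<theta>. ennreal (perm_dens \<mu> \<Phi> T K \<sigma> \<theta>))) (Pi\<^sub>E {1..K} A)
       = (\<integral>\<^sup>+\<theta>. ennreal (perm_dens \<mu> \<Phi> T K \<sigma> \<theta>) * indicator (Pi\<^sub>E {1..K} A) \<theta> \<partial>(\<Pi>\<^sub>M k\<in>{1..K}. \<mu>))"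
      using As pdm by (simp add: emeasure_density)
    also have "\<dots> = (\<integral>\<^sup>+\<theta>. (\<Prod>i\<in>{1..K}. ennreal (tdens \<mu> \<Phi> (T (\<sigma> i)) (\<theta> i)) * indicator (A i) (\<theta> i)) \<partial>(\<Pi>\<^sub>M k\<in>{1..K}. \<mu>))"
    proof (rule nn_integral_cong)
      fix \<theta> assume "\<theta> \<in> space (\<Pi>\<^sub>M k\<in>{1..K}. \<mu>)"
      then have "\<theta> \<in> extensional {1..K}" by (simp add: space_PiM PiE_def)
      show "ennreal (perm_dens \<mu> \<Phi> T K \<sigma> \<theta>) * indicator (Pi\<^sub>E {1..K} A) \<theta> =
          (\<Prod>i\<in>{1..K}. ennreal (tdens \<mu> \<Phi> (T (\<sigma> i)) (\<theta> i)) * indicator (A i) (\<theta> i))"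
      proof -
        have "ennreal (perm_dens \<mu> \<Phi> T K \<sigma> \<theta>) = (\<Prod>i\<in>{1..K}. ennreal (tdens \<mu> \<Phi> (T (\<sigma> i)) (\<theta> i)))"
          unfolding perm_dens_def using tf(2) by (intro prod_ennreal[symmetric]) (simp add: less_imp_le)
        moreover have "(indicator (Pi\<^sub>E {1..K} A) \<theta> :: ennreal) = (\<Prod>i\<in>{1..K}. indicator (A i) (\<theta> i))"
          using \<open>\<theta> \<in> extensional {1..K}\<close> by (intro indicator_PiE_prod) auto
        ultimately show ?thesis by (simp only: prod.distrib)
      qed
    qed
    also have "\<dots> = (\<Prod>i\<in>{1..K}. (\<integral>\<^sup>+x. ennreal (tdens \<mu> \<Phi> (T (\<sigma> i)) x) * indicator (A i) x \<partial>\<mu>))"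
      using A M's tdm by (intro PS.product_nn_integral_prod) auto
    also have "\<dots> = (\<Prod>i\<in>{1..K}. emeasure (M' i) (A i))"
      using A M's tdm by (intro prod.cong refl) (simp add: M'_def tmeas_def emeasure_density)
    finally show "emeasure (density (\<Pi>\<^sub>M k\<in>{1..K}. \<mu>) (\<lambda>\<theta>. ennreal (perm_dens \<mu> \<Phi> T K \<sigma> \<theta>))) (Pi\<^sub>E {1..K} A)
       = (\<Prod>i\<in>{1..K}. emeasure (M' i) (A i))" .
  qed simp
  then show ?thesis using pm by simp
qed


lemma perm_dens_meas:
  assumes P: "prob_space \<mu>" and S: "sets \<mu> = sets borel" and Ph: "\<Phi> \<in> borel_measurable borel"
  shows "perm_dens \<mu> \<Phi> T K \<sigma> \<in> borel_measurable (\<Pi>\<^sub>M k\<in>{1..K}. \<mu>)"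
  unfolding perm_dens_def[abs_def]
proof (intro borel_measurable_prod)
  fix i assume i: "i \<in> {1..K}"
  have tdm: "tdens \<mu> \<Phi> (T (\<sigma> i)) \<in> borel_measurable \<mu>"
    unfolding tdens_def[abs_def] using tempered_meas[OF S Ph] by measurable
  show "(\<lambda>\<theta>. tdens \<mu> \<Phi> (T (\<sigma> i)) (\<theta> i)) \<in> borel_measurable (\<Pi>\<^sub>M k\<in>{1..K}. \<mu>)"
    using measurable_compose[OF measurable_component_singleton[of i "{1..K}" "\<lambda>_. \<mu>"] tdm] i by simp
qed

lemma perm_dens_nonneg:
  assumes P: "prob_space \<mu>" and S: "sets \<mu> = sets borel" and Ph: "\<Phi> \<in> borel_measurable borel"
    and I: "\<And>k. k \<in> {1..K} \<Longrightarrow> integrable \<mu> (\<lambda>x. exp (- tempered \<Phi> (T k) x))"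
    and sig: "\<sigma> permutes {1..K}"
  shows "perm_dens \<mu> \<Phi> T K \<sigma> \<theta> \<ge> 0"
proof -
  have sk: "\<sigma> k \<in> {1..K}" if "k \<in> {1..K}" for k using permutes_in_image[OF sig] that by blast
  show ?thesis unfolding perm_dens_def
    using tdens_facts(2)[OF P S Ph I[OF sk]] by (intro prod_nonneg) (simp add: less_imp_le)
qed

lemma mix_meas_density:
  assumes P: "prob_space \<mu>" and S: "sets \<mu> = sets borel" and Ph: "\<Phi> \<in> borel_measurable borel"
    and I: "\<And>k. k \<in> {1..K} \<Longrightarrow> integrable \<mu> (\<lambda>x. exp (- tempered \<Phi> (T k) x))"
    and sig: "\<And>\<sigma>. \<sigma> \<in> SS \<Longrightarrow> \<sigma> permutes {1..K}" and fin: "finite SS"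
  shows "mix_meas \<mu> \<Phi> T K SS = density (\<Pi>\<^sub>M k\<in>{1..K}. \<mu>)
           (\<lambda>\<theta>. ennreal ((1 / real (card SS)) * (\<Sum>\<sigma>\<in>SS. perm_dens \<mu> \<Phi> T K \<sigma> \<theta>)))"
    (is "_ = ?D")
proof -
  let ?P = "\<Pi>\<^sub>M k\<in>{1..K}. \<mu>"
  have pm: "\<And>\<sigma>. perm_dens \<mu> \<Phi> T K \<sigma> \<in> borel_measurable ?P" using perm_dens_meas[OF P S Ph] .
  have nn: "\<And>\<sigma> \<theta>. \<sigma> \<in> SS \<Longrightarrow> perm_dens \<mu> \<Phi> T K \<sigma> \<theta> \<ge> 0"
    using perm_dens_nonneg[where T=T and K=K, OF P S Ph I sig] by blast
  have "mix_meas \<mu> \<Phi> T K SS = measure_of (space ?D) (sets ?D) (emeasure ?D)"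
    unfolding mix_meas_def
  proof (simp only: space_density sets_density, rule measure_of_eq)
    show "sets ?P \<subseteq> Pow (space ?P)" by (rule sets.space_closed)
    fix A assume "A \<in> sigma_sets (space ?P) (sets ?P)"
    then have A: "A \<in> sets ?P" by (simp add: sets.sigma_sets_eq)
    have "ennreal (1 / real (card SS)) * (\<Sum>\<sigma>\<in>SS. emeasure (perm_meas \<mu> \<Phi> T K \<sigma>) A)
        = ennreal (1 / real (card SS)) * (\<Sum>\<sigma>\<in>SS. \<integral>\<^sup>+\<theta>. ennreal (perm_dens \<mu> \<Phi> T K \<sigma> \<theta>) * indicator A \<theta> \<partial>?P)"
    proof (intro arg_cong[where f="(*) _"] sum.cong refl)
      fix \<sigma> assume "\<sigma> \<in> SS"
      then have "perm_meas \<mu> \<Phi> T K \<sigma> = density ?P (\<lambda>\<theta>. ennreal (perm_dens \<mu> \<Phi> T K \<sigma> \<theta>))"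
        using perm_meas_density[where T=T and K=K, OF P S Ph I sig] by blast
      then show "emeasure (perm_meas \<mu> \<Phi> T K \<sigma>) A = (\<integral>\<^sup>+\<theta>. ennreal (perm_dens \<mu> \<Phi> T K \<sigma> \<theta>) * indicator A \<theta> \<partial>?P)"
        using A pm by (simp add: emeasure_density)
    qed
    also have "\<dots> = ennreal (1 / real (card SS)) * (\<integral>\<^sup>+\<theta>. (\<Sum>\<sigma>\<in>SS. ennreal (perm_dens \<mu> \<Phi> T K \<sigma> \<theta>) * indicator A \<theta>) \<partial>?P)"
      using A pm by (subst nn_integral_sum) auto
    also have "\<dots> = (\<integral>\<^sup>+\<theta>. ennreal (1 / real (card SS)) * (\<Sum>\<sigma>\<in>SS. ennreal (perm_dens \<mu> \<Phi> T K \<sigma> \<theta>) * indicator A \<theta>) \<partial>?P)"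
      using A pm by (subst nn_integral_cmult) auto
    also have "\<dots> = (\<integral>\<^sup>+\<theta>. ennreal ((1 / real (card SS)) * (\<Sum>\<sigma>\<in>SS. perm_dens \<mu> \<Phi> T K \<sigma> \<theta>)) * indicator A \<theta> \<partial>?P)"
    proof (intro nn_integral_cong)
      fix \<theta>
      have "(\<Sum>\<sigma>\<in>SS. ennreal (perm_dens \<mu> \<Phi> T K \<sigma> \<theta>)) = ennreal (\<Sum>\<sigma>\<in>SS. perm_dens \<mu> \<Phi> T K \<sigma> \<theta>)"
        using nn by (intro sum_ennreal) auto
      moreover have "ennreal ((1 / real (card SS)) * (\<Sum>\<sigma>\<in>SS. perm_dens \<mu> \<Phi> T K \<sigma> \<theta>)) =
          ennreal (1 / real (card SS)) * ennreal (\<Sum>\<sigma>\<in>SS. perm_dens \<mu> \<Phi> T K \<sigma> \<theta>)"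
        using nn by (intro ennreal_mult) (auto intro: sum_nonneg)
      ultimately show "ennreal (1 / real (card SS)) * (\<Sum>\<sigma>\<in>SS. ennreal (perm_dens \<mu> \<Phi> T K \<sigma> \<theta>) * indicator A \<theta>) =
          ennreal ((1 / real (card SS)) * (\<Sum>\<sigma>\<in>SS. perm_dens \<mu> \<Phi> T K \<sigma> \<theta>)) * indicator A \<theta>"
        by (simp add: sum_distrib_right[symmetric] mult.assoc)
    qed
    also have "\<dots> = emeasure ?D A"
      using A pm by (subst emeasure_density) auto
    finally show "ennreal (1 / real (card SS)) * (\<Sum>\<sigma>\<in>SS. emeasure (perm_meas \<mu> \<Phi> T K \<sigma>) A) = emeasure ?D A" .
  qed
  then show ?thesis using measure_of_of_measure[of ?D] by simp
qed


lemma dens_facts: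
  fixes g f :: "'b \<Rightarrow> real"
  assumes ps: "prob_space (density P (\<lambda>x. ennreal (g x)))" and gm: "g \<in> borel_measurable P"
    and gn: "\<And>x. g x \<ge> 0" and fm: "f \<in> borel_measurable P"
    and i2: "integrable P (\<lambda>x. g x * (f x)\<^sup>2)"
  shows "integrable P g" "integrable P (\<lambda>x. g x * f x)" "(\<integral>x. g x \<partial>P) = 1"
    "variance_of (density P (\<lambda>x. ennreal (g x))) f = (\<integral>x. g x * (f x)\<^sup>2 \<partial>P) - (\<integral>x. g x * f x \<partial>P)\<^sup>2"
    "variance_of (density P (\<lambda>x. ennreal (g x))) f \<ge> 0"
proof -
  let ?D = "density P (\<lambda>x. ennreal (g x))"
  interpret D: prob_space ?D by fact
  have fmD: "f \<in> borel_measurable ?D" using fm by simp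
  have AEn: "AE x in P. 0 \<le> g x" using gn by simp
  have i2D: "integrable ?D (\<lambda>x. (f x)\<^sup>2)"
    using i2 fm gm by (subst integrable_density[OF _ gm AEn]) auto
  have i1D: "integrable ?D f" using D.square_integrable_imp_integrable[OF fmD i2D] .
  show "integrable P (\<lambda>x. g x * f x)" using i1D integrable_density[OF fm gm AEn] by simp
  have "integrable ?D (\<lambda>_. 1::real)" by simp
  then show "integrable P g" using integrable_density[OF _ gm AEn, of "\<lambda>_. 1::real"] by simp
  have "(\<integral>x. 1 \<partial>?D) = (\<integral>x. g x \<partial>P)" using integral_density[OF _ gm AEn, of "\<lambda>_. 1::real"] by simp
  then show "(\<integral>x. g x \<partial>P) = 1" using D.prob_space by simp
  have e1: "(\<integral>x. f x \<partial>?D) = (\<integral>x. g x * f x \<partial>P)" using integral_density[OF fm gm AEn] by simp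
  have e2: "(\<integral>x. (f x)\<^sup>2 \<partial>?D) = (\<integral>x. g x * (f x)\<^sup>2 \<partial>P)"
    using integral_density[OF _ gm AEn, of "\<lambda>x. (f x)\<^sup>2"] fm by simp
  show "variance_of ?D f = (\<integral>x. g x * (f x)\<^sup>2 \<partial>P) - (\<integral>x. g x * f x \<partial>P)\<^sup>2"
    unfolding variance_of_def using D.variance_eq[OF i1D i2D] e1 e2 by simp
  show "variance_of ?D f \<ge> 0" unfolding variance_of_def by simp
qed

lemma key_pt:
  fixes x a u v :: real
  assumes "u \<ge> 0" "v \<ge> 0"
  shows "0 \<le> x\<^sup>2 * (u + v) - 2 * a * x * (u - v) + a\<^sup>2 * (u + v - 2 * min u v)"
proof (cases "u \<ge> v")
  case True
  have "0 \<le> (u - v) * (x - a)\<^sup>2" using True by simp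
  moreover have "x\<^sup>2 * (u - v) \<le> x\<^sup>2 * (u + v)" using assms by (intro mult_left_mono) auto
  ultimately show ?thesis using True by (simp add: power2_diff algebra_simps)
next
  case False
  have "0 \<le> (v - u) * (x + a)\<^sup>2" using False by simp
  moreover have "x\<^sup>2 * (v - u) \<le> x\<^sup>2 * (u + v)" using assms by (intro mult_left_mono) auto
  ultimately show ?thesis using False by (simp add: power2_sum algebra_simps)
qed

lemma key_real:
  fixes A1 A2 m1 m2 l :: real
  assumes H: "\<And>p q. 0 \<le> (A1 - 2 * p * m1 + p\<^sup>2) + (A2 - 2 * q * m2 + q\<^sup>2) - l * (p - q)\<^sup>2 / 2"
    and l1: "l \<le> 1" and v1: "A1 - m1\<^sup>2 \<ge> 0" and v2: "A2 - m2\<^sup>2 \<ge> 0"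
  shows "l * (m1 - m2)\<^sup>2 \<le> 2 * (1 - l) * ((A1 - m1\<^sup>2) + (A2 - m2\<^sup>2))"
proof -
  define V where "V = (A1 - m1\<^sup>2) + (A2 - m2\<^sup>2)"
  define d where "d = m1 - m2"
  have G: "0 \<le> V + 2 * t\<^sup>2 - l * (d + 2 * t)\<^sup>2 / 2" for t
    using H[of "m1 + t" "m2 - t"] unfolding V_def d_def by (simp add: power2_eq_square algebra_simps)
  show ?thesis
  proof (cases "l = 1")
    case True
    have "d = 0"
    proof (rule ccontr)
      assume "d \<noteq> 0"
      then have "d\<^sup>2 > 0" by simp
      have "0 \<le> V + 2 * (((V + 1) / (2 * d)))\<^sup>2 - (d + 2 * ((V + 1) / (2 * d)))\<^sup>2 / 2"
        using G[of "(V + 1) / (2 * d)"] True by simp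
      also have "\<dots> = - d\<^sup>2 / 2 - 1" using \<open>d \<noteq> 0\<close>
        by (simp add: power2_eq_square field_simps)
      finally show False using \<open>d\<^sup>2 > 0\<close> by simp
    qed
    then show ?thesis using True d_def by simp
  next
    case False
    then have l1': "1 - l > 0" using l1 by simp
    define t where "t = l * d / (2 * (1 - l))"
    have "0 \<le> V + 2 * t\<^sup>2 - l * (d + 2 * t)\<^sup>2 / 2" using G .
    also have "\<dots> = V - l * d\<^sup>2 / (2 * (1 - l))"
    proof -
      define e where "e = 1 - l"
      have e0: "e > 0" "e \<noteq> 0" using l1' e_def by auto
      have le: "l = 1 - e" using e_def by simp
      show ?thesis unfolding t_def le using e0 by (simp add: power2_eq_square field_simps)
    qed
    finally have "l * d\<^sup>2 / (2 * (1 - l)) \<le> V" by simp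
    then show ?thesis using l1' unfolding V_def[symmetric] d_def[symmetric]
      by (simp add: field_simps)
  qed
qed



lemma sum_algebra:
  fixes m A :: "'c \<Rightarrow> real" and L :: real
  assumes fin: "finite S" and ne: "S \<noteq> {}" and sm: "(\<Sum>s\<in>S. m s) = 0" and sA: "(\<Sum>s\<in>S. A s) = real (card S)"
    and H: "\<And>s r. s \<in> S \<Longrightarrow> r \<in> S \<Longrightarrow> L * (m s - m r)\<^sup>2 \<le> 2 * (1 - L) * ((A s - (m s)\<^sup>2) + (A r - (m r)\<^sup>2))"
    and L0: "0 < L" and L1: "L \<le> 1"
  shows "L / (2 - L) \<le> (1 / real (card S)) * (\<Sum>s\<in>S. A s - (m s)\<^sup>2)"
proof -
  define n where "n = real (card S)"
  have "card S > 0" using fin ne by (simp add: card_gt_0_iff)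
  then have n0: "n > 0" unfolding n_def by simp
  define M where "M = (\<Sum>s\<in>S. (m s)\<^sup>2)"
  define v where "v s = A s - (m s)\<^sup>2" for s
  define V where "V = (\<Sum>s\<in>S. v s)"
  have VM: "V = n - M" unfolding V_def M_def n_def v_def using sA by (simp add: sum_subtractf)
  have "(\<Sum>s\<in>S. \<Sum>r\<in>S. L * (m s - m r)\<^sup>2) \<le> (\<Sum>s\<in>S. \<Sum>r\<in>S. 2 * (1 - L) * (v s + v r))"
    using H unfolding v_def by (intro sum_mono) auto
  also have "(\<Sum>s\<in>S. \<Sum>r\<in>S. 2 * (1 - L) * (v s + v r)) = 2 * (1 - L) * (2 * n * V)"
  proof -
    have "(\<Sum>s\<in>S. \<Sum>r\<in>S. v s + v r) = (\<Sum>s\<in>S. n * v s + V)"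
      unfolding V_def n_def by (simp only: sum.distrib sum_constant)
    also have "\<dots> = n * V + n * V" unfolding V_def n_def
      by (simp only: sum.distrib sum_constant sum_distrib_left[symmetric])
    finally have "(\<Sum>s\<in>S. \<Sum>r\<in>S. v s + v r) = 2 * n * V" by simp
    then show ?thesis by (simp only: sum_distrib_left[symmetric])
  qed
  also have "(\<Sum>s\<in>S. \<Sum>r\<in>S. L * (m s - m r)\<^sup>2) = L * (2 * n * M)"
  proof -
    have "(\<Sum>s\<in>S. \<Sum>r\<in>S. (m s - m r)\<^sup>2) = (\<Sum>s\<in>S. \<Sum>r\<in>S. ((m s)\<^sup>2 + (m r)\<^sup>2) - 2 * m s * m r)"
      by (intro sum.cong refl) (simp add: power2_diff)
    also have "\<dots> = (\<Sum>s\<in>S. (n * (m s)\<^sup>2 + M) - 2 * m s * (\<Sum>r\<in>S. m r))"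
      unfolding M_def n_def by (simp only: sum_subtractf sum.distrib sum_constant sum_distrib_left)
    also have "\<dots> = (\<Sum>s\<in>S. n * (m s)\<^sup>2 + M)" using sm by simp
    also have "\<dots> = n * M + n * M" unfolding M_def n_def
      by (simp only: sum.distrib sum_constant sum_distrib_left[symmetric])
    finally have "(\<Sum>s\<in>S. \<Sum>r\<in>S. (m s - m r)\<^sup>2) = 2 * n * M" by simp
    then show ?thesis by (simp only: sum_distrib_left[symmetric])
  qed
  finally have "L * (2 * n * M) \<le> 2 * (1 - L) * (2 * n * V)" .
  then have "(2 * n) * (L * M) \<le> (2 * n) * (2 * (1 - L) * V)" by (simp only: ac_simps)
  then have "L * M \<le> 2 * (1 - L) * V" using n0 by simp
  moreover have "M = n - V" using VM by simp
  ultimately have "L * (n - V) \<le> 2 * (1 - L) * V" by simp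
  then have "L * n - L * V \<le> 2 * V - 2 * L * V" by (simp add: algebra_simps)
  then have "L * n \<le> (2 - L) * V" by (simp add: algebra_simps)
  then have "L / (2 - L) \<le> V / n" using n0 L1 by (simp add: field_simps)
  then show ?thesis unfolding V_def n_def v_def by simp
qed
theorem proposition7:
  fixes \<mu>pr :: "'a::{banach, second_countable_topology} measure"
    and \<Phi> :: "'a \<Rightarrow> real"
    and K :: nat
    and T :: "nat \<Rightarrow> ereal"
    and S :: "(nat \<Rightarrow> nat) set"
    and p :: "nat \<Rightarrow> 'a \<Rightarrow> 'a measure"
    and f :: "(nat \<Rightarrow> 'a) \<Rightarrow> real"
  assumes prior: "prob_space \<mu>pr" "sets \<mu>pr = sets borel"
    and Phi_meas: "\<Phi> \<in> borel_measurable borel"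
    and K_pos: "K \<ge> 1"
    and T1: "T 1 = 1"
    and T_mono: "\<And>k. 1 \<le> k \<Longrightarrow> k < K \<Longrightarrow> T k < T (Suc k)"
    and Z_fin: "\<And>k. k \<in> {1..K} \<Longrightarrow> integrable \<mu>pr (\<lambda>x. exp (- tempered \<Phi> (T k) x))"
    and S_perm: "\<And>\<sigma>. \<sigma> \<in> S \<Longrightarrow> \<sigma> permutes {1..K}"
    and S_ne: "S \<noteq> {}"
    and S_inv: "\<And>\<sigma>. \<sigma> \<in> S \<Longrightarrow> inv \<sigma> \<in> S"
    and kernel: "\<And>k. k \<in> {1..K} \<Longrightarrow> p k \<in> borel \<rightarrow>\<^sub>M prob_algebra borel"
    and invariant: "\<And>k. k \<in> {1..K} \<Longrightarrow> bind (tmeas \<mu>pr \<Phi> (T k)) (p k) = tmeas \<mu>pr \<Phi> (T k)"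
    and irred: "\<And>k. k \<in> {1..K} \<Longrightarrow> irreducible_wrt borel (p k) (tmeas \<mu>pr \<Phi> (T k))"
    and aperiodic: "\<And>k. k \<in> {1..K} \<Longrightarrow> aperiodic_wrt borel (p k) (tmeas \<mu>pr \<Phi> (T k))"
    and C1: "\<And>k. k \<in> {1..K} \<Longrightarrow> reversible borel (p k) (tmeas \<mu>pr \<Phi> (T k))"
    and C2: "\<And>k. k \<in> {1..K} \<Longrightarrow> spectral_gap (p k) (tmeas \<mu>pr \<Phi> (T k))"
    and C3: "\<And>\<sigma> \<rho>. \<sigma> \<in> S \<Longrightarrow> \<rho> \<in> S \<Longrightarrow> overlap \<mu>pr \<Phi> T K \<sigma> \<rho> > 0"
    and f_meas: "f \<in> borel_measurable (mix_meas \<mu>pr \<Phi> T K S)"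
    and f_L2: "integrable (mix_meas \<mu>pr \<Phi> T K S) (\<lambda>\<theta>. (f \<theta>)\<^sup>2)"
    and f_mean: "(\<integral>\<theta>. f \<theta> \<partial>mix_meas \<mu>pr \<Phi> T K S) = 0"
    and f_norm: "(\<integral>\<theta>. (f \<theta>)\<^sup>2 \<partial>mix_meas \<mu>pr \<Phi> T K S) = 1"
  shows "(let \<Lambda>m = Min {overlap \<mu>pr \<Phi> T K \<sigma> \<rho> | \<sigma> \<rho>. \<sigma> \<in> S \<and> \<rho> \<in> S} in
           0 < \<Lambda>m / (2 - \<Lambda>m)
         \<and> \<Lambda>m / (2 - \<Lambda>m) \<le> (1 / real (card S)) * (\<Sum>\<sigma>\<in>S. variance_of (perm_meas \<mu>pr \<Phi> T K \<sigma>) f)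
         \<and> (1 / real (card S)) * (\<Sum>\<sigma>\<in>S. variance_of (perm_meas \<mu>pr \<Phi> T K \<sigma>) f)
             \<le> variance_of (mix_meas \<mu>pr \<Phi> T K S) f
         \<and> variance_of (mix_meas \<mu>pr \<Phi> T K S) f = 1)"
proof -
  let ?P = "\<Pi>\<^sub>M k\<in>{1..K}. \<mu>pr"
  define \<pi> where "\<pi> \<sigma> = perm_dens \<mu>pr \<Phi> T K \<sigma>" for \<sigma>
  define n where "n = real (card S)"
  define w where "w \<theta> = (1 / real (card S)) * (\<Sum>\<sigma>\<in>S. \<pi> \<sigma> \<theta>)" for \<theta>
  have fin: "finite S"
    using finite_subset[of S "{\<sigma>. \<sigma> permutes {1..K}}"] S_perm finite_permutations[of "{1..K}"] by auto
  have "card S > 0" using fin S_ne by (simp add: card_gt_0_iff)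
  then have n0: "n > 0" unfolding n_def by simp
  have pim: "\<And>\<sigma>. \<pi> \<sigma> \<in> borel_measurable ?P" unfolding \<pi>_def using perm_dens_meas[OF prior Phi_meas] .
  have pin: "\<And>\<sigma> \<theta>. \<sigma> \<in> S \<Longrightarrow> \<pi> \<sigma> \<theta> \<ge> 0" unfolding \<pi>_def
    using perm_dens_nonneg[where T=T and K=K, OF prior Phi_meas Z_fin S_perm] by blast
  have pmd: "\<And>\<sigma>. \<sigma> \<in> S \<Longrightarrow> perm_meas \<mu>pr \<Phi> T K \<sigma> = density ?P (\<lambda>\<theta>. ennreal (\<pi> \<sigma> \<theta>))"
    unfolding \<pi>_def using perm_meas_density[where T=T and K=K, OF prior Phi_meas Z_fin S_perm] by blast
  have mixd: "mix_meas \<mu>pr \<Phi> T K S = density ?P (\<lambda>\<theta>. ennreal (w \<theta>))"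
    unfolding w_def \<pi>_def using mix_meas_density[where T=T and K=K, OF prior Phi_meas Z_fin S_perm fin] .
  have wm: "w \<in> borel_measurable ?P" unfolding w_def using pim by measurable
  have wn: "\<And>\<theta>. w \<theta> \<ge> 0" unfolding w_def using pin by (intro mult_nonneg_nonneg sum_nonneg) auto
  have AEw: "AE \<theta> in ?P. 0 \<le> w \<theta>" using wn by simp
  have fm: "f \<in> borel_measurable ?P"
    using f_meas unfolding mixd by simp
  have wf2: "integrable ?P (\<lambda>\<theta>. w \<theta> * (f \<theta>)\<^sup>2)"
    using f_L2 unfolding mixd using integrable_density[OF _ wm AEw, of "\<lambda>\<theta>. (f \<theta>)\<^sup>2"] fm by simp
  have pf2: "integrable ?P (\<lambda>\<theta>. \<pi> \<sigma> \<theta> * (f \<theta>)\<^sup>2)" if s: "\<sigma> \<in> S" for \<sigma>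
  proof (rule Bochner_Integration.integrable_bound[where f="\<lambda>\<theta>. real (card S) * (w \<theta> * (f \<theta>)\<^sup>2)"])
    show "integrable ?P (\<lambda>\<theta>. real (card S) * (w \<theta> * (f \<theta>)\<^sup>2))" using wf2 by simp
    show "(\<lambda>\<theta>. \<pi> \<sigma> \<theta> * (f \<theta>)\<^sup>2) \<in> borel_measurable ?P" using pim fm by measurable
    show "AE \<theta> in ?P. norm (\<pi> \<sigma> \<theta> * (f \<theta>)\<^sup>2) \<le> norm (real (card S) * (w \<theta> * (f \<theta>)\<^sup>2))"
    proof (intro AE_I2)
      fix \<theta>
      have "\<pi> \<sigma> \<theta> \<le> (\<Sum>\<rho>\<in>S. \<pi> \<rho> \<theta>)" using s fin pin by (intro member_le_sum) auto
      also have "\<dots> = real (card S) * w \<theta>" unfolding w_def using n0 n_def by simp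
      finally have "\<pi> \<sigma> \<theta> * (f \<theta>)\<^sup>2 \<le> real (card S) * w \<theta> * (f \<theta>)\<^sup>2" by (intro mult_right_mono) auto
      then show "norm (\<pi> \<sigma> \<theta> * (f \<theta>)\<^sup>2) \<le> norm (real (card S) * (w \<theta> * (f \<theta>)\<^sup>2))"
        using pin[OF s, of \<theta>] wn[of \<theta>] by (simp add: abs_mult mult.assoc)
    qed
  qed
  have ps: "prob_space (density ?P (\<lambda>\<theta>. ennreal (\<pi> \<sigma> \<theta>)))" if s: "\<sigma> \<in> S" for \<sigma>
  proof -
    have sk: "\<sigma> k \<in> {1..K}" if "k \<in> {1..K}" for k using permutes_in_image[OF S_perm[OF s]] that by blast
    have "prob_space (perm_meas \<mu>pr \<Phi> T K \<sigma>)" unfolding perm_meas_def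
      using tdens_facts(6)[OF prior Phi_meas Z_fin[OF sk]] by (intro prob_space_PiM) auto
    then show ?thesis using pmd[OF s] by simp
  qed
  define m where "m \<sigma> = (\<integral>\<theta>. \<pi> \<sigma> \<theta> * f \<theta> \<partial>?P)" for \<sigma>
  define A where "A \<sigma> = (\<integral>\<theta>. \<pi> \<sigma> \<theta> * (f \<theta>)\<^sup>2 \<partial>?P)" for \<sigma>
  have pint: "integrable ?P (\<pi> \<sigma>)" if "\<sigma> \<in> S" for \<sigma>
    using dens_facts(1)[OF ps[OF that] pim pin[OF that] fm pf2[OF that]] .
  have pfint: "integrable ?P (\<lambda>\<theta>. \<pi> \<sigma> \<theta> * f \<theta>)" if "\<sigma> \<in> S" for \<sigma>
    using dens_facts(2)[OF ps[OF that] pim pin[OF that] fm pf2[OF that]] .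
  have p1: "(\<integral>\<theta>. \<pi> \<sigma> \<theta> \<partial>?P) = 1" if "\<sigma> \<in> S" for \<sigma>
    using dens_facts(3)[OF ps[OF that] pim pin[OF that] fm pf2[OF that]] .
  have var: "variance_of (perm_meas \<mu>pr \<Phi> T K \<sigma>) f = A \<sigma> - (m \<sigma>)\<^sup>2" if "\<sigma> \<in> S" for \<sigma>
    using dens_facts(4)[OF ps[OF that] pim pin[OF that] fm pf2[OF that]] pmd[OF that]
    unfolding A_def m_def by simp
  have varnn: "A \<sigma> - (m \<sigma>)\<^sup>2 \<ge> 0" if "\<sigma> \<in> S" for \<sigma>
    using dens_facts(5)[OF ps[OF that] pim pin[OF that] fm pf2[OF that]] pmd[OF that] var[OF that] by simp
  have intw: "(\<integral>\<theta>. g \<theta> \<partial>mix_meas \<mu>pr \<Phi> T K S) = (1 / real (card S)) * (\<Sum>\<sigma>\<in>S. \<integral>\<theta>. \<pi> \<sigma> \<theta> * g \<theta> \<partial>?P)"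
    if gm: "g \<in> borel_measurable ?P" and gi: "\<And>\<sigma>. \<sigma> \<in> S \<Longrightarrow> integrable ?P (\<lambda>\<theta>. \<pi> \<sigma> \<theta> * g \<theta>)" for g
  proof -
    have "(\<integral>\<theta>. g \<theta> \<partial>mix_meas \<mu>pr \<Phi> T K S) = (\<integral>\<theta>. w \<theta> * g \<theta> \<partial>?P)"
      unfolding mixd using integral_density[OF gm wm AEw] by simp
    also have "\<dots> = (\<integral>\<theta>. (1 / real (card S)) * (\<Sum>\<sigma>\<in>S. \<pi> \<sigma> \<theta> * g \<theta>) \<partial>?P)"
      unfolding w_def by (simp add: sum_distrib_right mult.assoc)
    also have "\<dots> = (1 / real (card S)) * (\<integral>\<theta>. (\<Sum>\<sigma>\<in>S. \<pi> \<sigma> \<theta> * g \<theta>) \<partial>?P)"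
      by (rule integral_mult_right_zero)
    also have "(\<integral>\<theta>. (\<Sum>\<sigma>\<in>S. \<pi> \<sigma> \<theta> * g \<theta>) \<partial>?P) = (\<Sum>\<sigma>\<in>S. \<integral>\<theta>. \<pi> \<sigma> \<theta> * g \<theta> \<partial>?P)"
      using Bochner_Integration.integral_sum[where I=S and M="?P" and f="\<lambda>\<sigma> \<theta>. \<pi> \<sigma> \<theta> * g \<theta>"] gi by simp
    finally show ?thesis .
  qed
  have sm: "(\<Sum>\<sigma>\<in>S. m \<sigma>) = 0"
    using intw[OF fm pfint] f_mean n0 unfolding m_def n_def by simp
  have f2m: "(\<lambda>\<theta>. (f \<theta>)\<^sup>2) \<in> borel_measurable ?P" using fm by measurable
  have sA: "(\<Sum>\<sigma>\<in>S. A \<sigma>) = real (card S)"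
    using intw[OF f2m pf2] f_norm n0 unfolding A_def n_def by (simp add: field_simps)
  define ov where "ov \<sigma> \<rho> = overlap \<mu>pr \<Phi> T K \<sigma> \<rho>" for \<sigma> \<rho>
  have ovd: "ov \<sigma> \<rho> = (\<integral>\<theta>. min (\<pi> \<sigma> \<theta>) (\<pi> \<rho> \<theta>) \<partial>?P)" for \<sigma> \<rho>
    unfolding ov_def overlap_def \<pi>_def ..
  have ov1: "ov \<sigma> \<rho> \<le> 1" if "\<sigma> \<in> S" "\<rho> \<in> S" for \<sigma> \<rho>
  proof -
    have "ov \<sigma> \<rho> \<le> (\<integral>\<theta>. \<pi> \<sigma> \<theta> \<partial>?P)" unfolding ovd
      using pint that by (intro integral_mono) auto
    then show ?thesis using p1 that by simp
  qed
  have keyint: "ov \<sigma> \<rho> * (m \<sigma> - m \<rho>)\<^sup>2 \<le> 2 * (1 - ov \<sigma> \<rho>) * ((A \<sigma> - (m \<sigma>)\<^sup>2) + (A \<rho> - (m \<rho>)\<^sup>2))"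
    if s: "\<sigma> \<in> S" and r: "\<rho> \<in> S" for \<sigma> \<rho>
  proof (rule key_real[OF _ ov1[OF s r] varnn[OF s] varnn[OF r]])
    fix p q :: real
    define k where "k = (p - q)\<^sup>2 / 2"
    let ?g = "\<lambda>\<theta>. \<pi> \<sigma> \<theta> * (f \<theta>)\<^sup>2 + \<pi> \<rho> \<theta> * (f \<theta>)\<^sup>2 + (- 2 * p) * (\<pi> \<sigma> \<theta> * f \<theta>)
        + (- 2 * q) * (\<pi> \<rho> \<theta> * f \<theta>) + p\<^sup>2 * \<pi> \<sigma> \<theta> + q\<^sup>2 * \<pi> \<rho> \<theta> + (- k) * min (\<pi> \<sigma> \<theta>) (\<pi> \<rho> \<theta>)"
    have gnn: "0 \<le> ?g \<theta>" for \<theta>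
    proof -
      have "0 \<le> (f \<theta> - (p + q) / 2)\<^sup>2 * (\<pi> \<sigma> \<theta> + \<pi> \<rho> \<theta>) - 2 * ((p - q) / 2) * (f \<theta> - (p + q) / 2) * (\<pi> \<sigma> \<theta> - \<pi> \<rho> \<theta>)
          + ((p - q) / 2)\<^sup>2 * (\<pi> \<sigma> \<theta> + \<pi> \<rho> \<theta> - 2 * min (\<pi> \<sigma> \<theta>) (\<pi> \<rho> \<theta>))"
        using pin[OF s] pin[OF r] by (intro key_pt) auto
      also have "\<dots> = ?g \<theta>" unfolding k_def by (simp add: power2_eq_square field_simps)
      finally show ?thesis .
    qed
    have "0 \<le> (\<integral>\<theta>. ?g \<theta> \<partial>?P)" using gnn by (intro Bochner_Integration.integral_nonneg) auto
    also have "(\<integral>\<theta>. ?g \<theta> \<partial>?P) = A \<sigma> + A \<rho> + (- 2 * p) * m \<sigma> + (- 2 * q) * m \<rho> + p\<^sup>2 * 1 + q\<^sup>2 * 1 + (- k) * ov \<sigma> \<rho>"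
      unfolding A_def m_def ovd using pf2[OF s] pf2[OF r] pfint[OF s] pfint[OF r] pint[OF s] pint[OF r]
        p1[OF s] p1[OF r]
      by (simp add: Bochner_Integration.integral_add del: integral_mult_right_zero)
    finally show "0 \<le> (A \<sigma> - 2 * p * m \<sigma> + p\<^sup>2) + (A \<rho> - 2 * q * m \<rho> + q\<^sup>2) - ov \<sigma> \<rho> * (p - q)\<^sup>2 / 2"
      unfolding k_def by (simp add: algebra_simps)
  qed
  define \<Lambda> where "\<Lambda> = Min {overlap \<mu>pr \<Phi> T K \<sigma> \<rho> | \<sigma> \<rho>. \<sigma> \<in> S \<and> \<rho> \<in> S}"
  have seteq: "{overlap \<mu>pr \<Phi> T K \<sigma> \<rho> | \<sigma> \<rho>. \<sigma> \<in> S \<and> \<rho> \<in> S} = (\<lambda>(\<sigma>, \<rho>). ov \<sigma> \<rho>) ` (S \<times> S)"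
    unfolding ov_def by auto
  have finset: "finite {overlap \<mu>pr \<Phi> T K \<sigma> \<rho> | \<sigma> \<rho>. \<sigma> \<in> S \<and> \<rho> \<in> S}" unfolding seteq using fin by simp
  have neset: "{overlap \<mu>pr \<Phi> T K \<sigma> \<rho> | \<sigma> \<rho>. \<sigma> \<in> S \<and> \<rho> \<in> S} \<noteq> {}" using S_ne by auto
  have Lle: "\<Lambda> \<le> ov \<sigma> \<rho>" if "\<sigma> \<in> S" "\<rho> \<in> S" for \<sigma> \<rho>
    unfolding \<Lambda>_def ov_def using finset that by (intro Min_le) auto
  obtain \<sigma>0 \<rho>0 where s0: "\<sigma>0 \<in> S" "\<rho>0 \<in> S" "\<Lambda> = ov \<sigma>0 \<rho>0"
    using Min_in[OF finset neset] unfolding \<Lambda>_def ov_def by auto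
  have L0: "\<Lambda> > 0" using C3[OF s0(1,2)] s0(3) ov_def by simp
  have L1: "\<Lambda> \<le> 1" using ov1[OF s0(1,2)] s0(3) by simp
  have H: "\<Lambda> * (m \<sigma> - m \<rho>)\<^sup>2 \<le> 2 * (1 - \<Lambda>) * ((A \<sigma> - (m \<sigma>)\<^sup>2) + (A \<rho> - (m \<rho>)\<^sup>2))"
    if s: "\<sigma> \<in> S" and r: "\<rho> \<in> S" for \<sigma> \<rho>
  proof -
    have "\<Lambda> * (m \<sigma> - m \<rho>)\<^sup>2 \<le> ov \<sigma> \<rho> * (m \<sigma> - m \<rho>)\<^sup>2"
      using Lle[OF s r] by (intro mult_right_mono) auto
    also have "\<dots> \<le> 2 * (1 - ov \<sigma> \<rho>) * ((A \<sigma> - (m \<sigma>)\<^sup>2) + (A \<rho> - (m \<rho>)\<^sup>2))" using keyint[OF s r] .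
    also have "\<dots> \<le> 2 * (1 - \<Lambda>) * ((A \<sigma> - (m \<sigma>)\<^sup>2) + (A \<rho> - (m \<rho>)\<^sup>2))"
      using Lle[OF s r] varnn[OF s] varnn[OF r] by (intro mult_right_mono) auto
    finally show ?thesis .
  qed
  have main: "\<Lambda> / (2 - \<Lambda>) \<le> (1 / real (card S)) * (\<Sum>\<sigma>\<in>S. A \<sigma> - (m \<sigma>)\<^sup>2)"
    using sum_algebra[OF fin S_ne sm sA H L0 L1] by blast
  have sumvar: "(\<Sum>\<sigma>\<in>S. variance_of (perm_meas \<mu>pr \<Phi> T K \<sigma>) f) = (\<Sum>\<sigma>\<in>S. A \<sigma> - (m \<sigma>)\<^sup>2)"
    using var by (rule sum.cong[OF refl])
  have vW: "variance_of (mix_meas \<mu>pr \<Phi> T K S) f = 1"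
    unfolding variance_of_def using f_mean f_norm by simp
  have le1: "(1 / real (card S)) * (\<Sum>\<sigma>\<in>S. A \<sigma> - (m \<sigma>)\<^sup>2) \<le> 1"
  proof -
    have "(\<Sum>\<sigma>\<in>S. A \<sigma> - (m \<sigma>)\<^sup>2) \<le> (\<Sum>\<sigma>\<in>S. A \<sigma>)" by (intro sum_mono) auto
    then show ?thesis using sA n0 n_def by (simp add: field_simps)
  qed
  have pos: "0 < \<Lambda> / (2 - \<Lambda>)" using L0 L1 by simp
  show ?thesis unfolding Let_def \<Lambda>_def[symmetric] sumvar vW using pos main le1 by simp
qed


end
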